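(* Let $M$ be a magma satisfying $(xy)z = xx$ and $x(yz) = xy$ for all $x,y,z\in M$. Then $M$ satisfies $xy = xz$ and $(xy)z = xy$ for all $x,y,z\in M$ if and only if $M$ avoids the magma $E$ on $\{0,1,2,3\}$ with Cayley table \[ \begin{array}{c|cccc} E & 0 & 1 & 2 & 3 \\ \hline 0 & 2 & 3 & 2 & 2 \\ 1 & 1 & 1 & 1 & 1 \\ 2 & 2 & 2 & 2 & 2 \\ 3 & 2 & 2 & 2 & 2 \end{array}. \]
   Context: A magma is a nonempty set with a binary operation, written by juxtaposition. A magma $M$ avoids a magma $F$ if no submagma of $M$ is isomorphic to $F$. In the Cayley table, the entry in row $i$, column $j$ is $i\cdot j$. *)

theory Defs
  imports Main
begin

definition magma :: "'a set \<Rightarrow> ('a \<Rightarrow> 'a \<Rightarrow> 'a) \<Rightarrow> bool" where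
  "magma M f \<longleftrightarrow> M \<noteq> {} \<and> (\<forall>x\<in>M. \<forall>y\<in>M. f x y \<in> M)"

definition avoids ::
  "'a set \<Rightarrow> ('a \<Rightarrow> 'a \<Rightarrow> 'a) \<Rightarrow> 'b set \<Rightarrow> ('b \<Rightarrow> 'b \<Rightarrow> 'b) \<Rightarrow> bool" where
  "avoids M f A g \<longleftrightarrow>
     \<not> (\<exists>S. S \<subseteq> M \<and> S \<noteq> {} \<and> (\<forall>x\<in>S. \<forall>y\<in>S. f x y \<in> S) \<and>
           (\<exists>h. bij_betw h A S \<and> (\<forall>x\<in>A. \<forall>y\<in>A. h (g x y) = f (h x) (h y))))"

text \<open>The magma E on {0,1,2,3}; row i, column j holds i*j.\<close>
definition E_carrier :: "nat set" where "E_carrier = {0,1,2,3}"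

definition E_op :: "nat \<Rightarrow> nat \<Rightarrow> nat" where
  "E_op x y = (if x = 0 then (if y = 1 then 3 else 2)
               else if x = 1 then 1 else 2)"

end

theory Submission
  imports Defs
begin

theorem mainTheorem12:
  fixes M :: "'a set" and f :: "'a \<Rightarrow> 'a \<Rightarrow> 'a"
  assumes "magma M f"
    and "\<forall>x\<in>M. \<forall>y\<in>M. \<forall>z\<in>M. f (f x y) z = f x x"
    and "\<forall>x\<in>M. \<forall>y\<in>M. \<forall>z\<in>M. f x (f y z) = f x y"
  shows "((\<forall>x\<in>M. \<forall>y\<in>M. \<forall>z\<in>M. f x y = f x z) \<and>
          (\<forall>x\<in>M. \<forall>y\<in>M. \<forall>z\<in>M. f (f x y) z = f x y))
         \<longleftrightarrow> avoids M f E_carrier E_op"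
proof
  assume L: "(\<forall>x\<in>M. \<forall>y\<in>M. \<forall>z\<in>M. f x y = f x z) \<and>
          (\<forall>x\<in>M. \<forall>y\<in>M. \<forall>z\<in>M. f (f x y) z = f x y)"
  show "avoids M f E_carrier E_op"
    unfolding avoids_def
  proof
    assume "\<exists>S. S \<subseteq> M \<and> S \<noteq> {} \<and> (\<forall>x\<in>S. \<forall>y\<in>S. f x y \<in> S) \<and>
           (\<exists>h. bij_betw h E_carrier S \<and> (\<forall>x\<in>E_carrier. \<forall>y\<in>E_carrier. h (E_op x y) = f (h x) (h y)))"
    then obtain S h where S: "S \<subseteq> M" and b: "bij_betw h E_carrier S"
      and hom: "\<forall>x\<in>E_carrier. \<forall>y\<in>E_carrier. h (E_op x y) = f (h x) (h y)" by blast
    have in0: "h 0 \<in> M" "h 1 \<in> M" using b S unfolding bij_betw_def E_carrier_def by auto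
    have "h 3 = f (h 0) (h 1)" using hom[rule_format, of 0 1] by (simp add: E_carrier_def E_op_def)
    also have "\<dots> = f (h 0) (h 0)" using L in0 by blast
    also have "\<dots> = h 2" using hom[rule_format, of 0 0] by (simp add: E_carrier_def E_op_def)
    finally have "h 3 = h 2" .
    moreover have "inj_on h E_carrier" using b by (simp add: bij_betw_def)
    ultimately show False unfolding inj_on_def E_carrier_def by force
  qed
next
  assume A: "avoids M f E_carrier E_op"
  have key: "\<forall>x\<in>M. \<forall>y\<in>M. f x y = f x x"
  proof (rule ccontr)
    assume "\<not> (\<forall>x\<in>M. \<forall>y\<in>M. f x y = f x x)"
    then obtain a b where a: "a \<in> M" and bM: "b \<in> M" and ne: "f a b \<noteq> f a a" by blast
    have cl: "\<And>x y. x \<in> M \<Longrightarrow> y \<in> M \<Longrightarrow> f x y \<in> M" using assms(1) by (simp add: magma_def)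
    have I1: "\<And>x y z. x \<in> M \<Longrightarrow> y \<in> M \<Longrightarrow> z \<in> M \<Longrightarrow> f (f x y) z = f x x" using assms(2) by blast
    have I2: "\<And>x y z. x \<in> M \<Longrightarrow> y \<in> M \<Longrightarrow> z \<in> M \<Longrightarrow> f x (f y z) = f x y" using assms(3) by blast
    define h where "h = (\<lambda>n::nat. if n = 0 then a else if n = 1 then f b b else if n = 2 then f a a else f a b)"
    have aa: "f a a \<in> M" "f b b \<in> M" "f a b \<in> M" using cl a bM by auto
    have d1: "a \<noteq> f a a"
    proof
      assume "a = f a a"
      then have "f a b = f (f a a) b" by simp
      also have "\<dots> = f a a" using I1 a bM by blast
      finally show False using ne by simp
    qed
    have d2: "a \<noteq> f a b"
    proof
      assume "a = f a b"
      then have "f a b = f (f a b) b" by simp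
      also have "\<dots> = f a a" using I1 a bM by blast
      finally show False using ne by simp
    qed
    have d3: "a \<noteq> f b b"
    proof
      assume e: "a = f b b"
      then have "f a b = f (f b b) b" by simp
      also have "\<dots> = f b b" using I1 bM by blast
      finally show False using d2 e by simp
    qed
    have d4: "f b b \<noteq> f a a"
    proof
      assume e: "f b b = f a a"
      have "f a b = f a (f b b)" using I2 a bM by metis
      also have "\<dots> = f a (f a a)" using e by simp
      also have "\<dots> = f a a" using I2 a by blast
      finally show False using ne by simp
    qed
    have d5: "f b b \<noteq> f a b"
    proof
      assume e: "f b b = f a b"
      have "f b b = f (f b b) b" using I1 bM by metis
      also have "\<dots> = f (f a b) b" using e by simp
      also have "\<dots> = f a a" using I1 a bM by blast
      finally show False using d4 by simp
    qed
    define S where "S = h ` E_carrier"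
    have Seq: "S = {a, f b b, f a a, f a b}" unfolding S_def h_def E_carrier_def by auto
    have inj: "inj_on h E_carrier"
      unfolding inj_on_def E_carrier_def h_def using d1 d2 d3 d4 d5 ne by auto
    have bij: "bij_betw h E_carrier S" using inj by (simp add: S_def bij_betw_def)
    have SM: "S \<subseteq> M" using Seq a aa by auto
    have r1: "\<And>z. z \<in> M \<Longrightarrow> f (f b b) z = f b b" using I1 bM by blast
    have r2: "\<And>z. z \<in> M \<Longrightarrow> f (f a a) z = f a a" using I1 a by blast
    have r3: "\<And>z. z \<in> M \<Longrightarrow> f (f a b) z = f a a" using I1 a bM by blast
    have r4: "f a (f b b) = f a b" "f a (f a a) = f a a" "f a (f a b) = f a a"
      using I2 a bM by blast+
    have clS: "\<forall>x\<in>S. \<forall>y\<in>S. f x y \<in> S"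
      using Seq r1 r2 r3 r4 a aa by auto
    have hom: "\<forall>x\<in>E_carrier. \<forall>y\<in>E_carrier. h (E_op x y) = f (h x) (h y)"
      unfolding E_carrier_def E_op_def h_def using r1 r2 r3 r4 a aa by auto
    have "\<exists>S. S \<subseteq> M \<and> S \<noteq> {} \<and> (\<forall>x\<in>S. \<forall>y\<in>S. f x y \<in> S) \<and>
           (\<exists>h. bij_betw h E_carrier S \<and> (\<forall>x\<in>E_carrier. \<forall>y\<in>E_carrier. h (E_op x y) = f (h x) (h y)))"
      using SM Seq clS bij hom by blast
    then show False using A unfolding avoids_def by blast
  qed
  show "(\<forall>x\<in>M. \<forall>y\<in>M. \<forall>z\<in>M. f x y = f x z) \<and>
          (\<forall>x\<in>M. \<forall>y\<in>M. \<forall>z\<in>M. f (f x y) z = f x y)"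
    using key assms(2) by metis
qed

end
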